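(* Consider the finite-horizon sensor scheduling problem (Problem 1) described in the context, with horizon $K\in\mathbb{Z}_+$ and trade-off parameter $\gamma>0$. Define $Q_K(\mathcal{M}_K)=\Tr(\Sigma_K)$ and, for $k=K-1,\ldots,0$, the $Q$-functions $$Q_k(\mathcal{M}_k)=\Tr(\Sigma_k)+\sum_{m=1}^M\gamma\Tr(\delta_{m,k}\mathbf{C}_m\mathbf{C}_m^T)+\mathbb{E}\Big[\min_{\pi_{k+1}}Q_{k+1}(\mathcal{M}_{k+1})\,\Big|\,\mathcal{M}_k\Big],$$ where $\mathcal{M}_k=\{\Sigma_k,\mathbf{H}_k,\pi_k\}$, $\Sigma_{k+1}=f(\mathcal{M}_k)+\mathbf{W}$, and the conditional expectation is over the fresh channel realization $\mathbf{H}_{k+1}$ (independent of $\mathcal{M}_k$). Then Problem 1 is optimally solved backward in time by these DP recursions (i.e., choosing $\pi_k$ to minimize $Q_k(\mathcal{M}_k)$ at each $k$), and for every $k=K-1,\ldots,0$, $$Q_k(\mathcal{M}_k)=\Tr(\Sigma_k)+\sum_{m=1}^M\gamma\Tr(\delta_{m,k}\mathbf{C}_m\mathbf{C}_m^T)+\Tr(f(\mathcal{M}_k))+(K-k)\Tr(\mathbf{W})+\Delta_k(\mathcal{M}_k)\mathbf{1}_{k\le K-2},$$ where $\Delta_{K-1}(\mathcal{M}_{K-1})=0$ and, for $k\le K-2$, $$\Delta_k(\mathcal{M}_k)=\mathbb{E}\Big[\min_{\pi_{k+1}}\Big(\sum_{m=1}^M\gamma\Tr(\delta_{m,k+1}\mathbf{C}_m\mathbf{C}_m^T)+\Tr\big(f(f(\mathcal{M}_k)+\mathbf{W},\pi_{k+1},\mathbf{H}_{k+1})\big)+\Delta_{k+1}\big(f(\mathcal{M}_k)+\mathbf{W},\mathbf{H}_{k+1},\pi_{k+1}\big)\Big)\,\Big|\,\mathcal{M}_k\Big].$$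 Moreover, the optimal solution $\pi_k^*=\{\delta^*_{1,k},\ldots,\delta^*_{M,k}\}$ minimizing $Q_k$ is given by $\delta^*_{m,k}=1$ when $$\Tr\big(f(\Sigma_k,\{\delta^*_{-m},\delta_{m,k}=0\},\mathbf{H}_k)\big)+\Delta_k\big(\Sigma_k,\mathbf{H}_k,\{\delta^*_{-m},\delta_{m,k}=0\}\big)-\Tr\big(f(\Sigma_k,\{\delta^*_{-m},\delta_{m,k}=1\},\mathbf{H}_k)\big)-\Delta_k\big(\Sigma_k,\mathbf{H}_k,\{\delta^*_{-m},\delta_{m,k}=1\}\big)\ge\Tr(\gamma\mathbf{C}_m\mathbf{C}_m^T),$$ where $\delta^*_{-m}=\{\delta^*_{i,k}:1\le i\le M,\ i\ne m\}$.
   Context: Plant: $\mathbf{x}_{k+1}=\mathbf{A}\mathbf{x}_k+\mathbf{w}_k$ with $\mathbf{x}_k\in\mathbb{R}^{S}$, known $\mathbf{A}\in\mathbb{R}^{S\times S}$, and i.i.d. $\mathbf{w}_k\sim\mathcal{N}(\mathbf{0},\mathbf{W})$ with $\mathbf{W}$ positive definite. There are $M$ sensors; sensor $m$ has $N_t$ transmit antennas and observation matrix $\mathbf{C}_m\in\mathbb{R}^{N_t\times S}$, measuring $\mathbf{z}_{m,k}=\mathbf{C}_m\mathbf{x}_k$. The receiver has $N_r$ antennas and receives $\mathbf{y}_k=\sum_{m=1}^M\delta_{m,k}\mathbf{H}_{m,k}\mathbf{z}_{m,k}+\mathbf{v}_k$, with $\mathbf{v}_k\sim\mathcal{N}(\mathbf{0},\mathbf{I}_{N_r})$,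 scheduling variables $\delta_{m,k}\in\{0,1\}$, and channel matrices $\mathbf{H}_{m,k}\in\mathbb{R}^{N_r\times N_t}$ whose entries are i.i.d. $\mathcal{N}(0,1)$, independent across sensors and time slots. Write $\mathbf{H}_k=\{\mathbf{H}_{1,k},\ldots,\mathbf{H}_{M,k}\}$, $\pi_k=\{\delta_{1,k},\ldots,\delta_{M,k}\}$, $\bar{\mathbf{H}}_{m,k}=\mathbf{H}_{m,k}\mathbf{C}_m$. For a positive definite $\Sigma$, define $$f(\Sigma,\pi_k,\mathbf{H}_k)=\mathbf{A}\Big(\Sigma^{-1}+\big(\textstyle\sum_{m=1}^M\delta_{m,k}\bar{\mathbf{H}}_{m,k}\big)^T\big(\sum_{m=1}^M\delta_{m,k}\bar{\mathbf{H}}_{m,k}\big)\Big)^{-1}\mathbf{A}^T,$$ and write $f(\mathcal{M}_k)$ for $f(\Sigma_k,\pi_k,\mathbf{H}_k)$ when $\mathcal{M}_k=\{\Sigma_k,\mathbf{H}_k,\pi_k\}$. The Kalman-filter prior error covariance evolves as $\Sigma_{k+1}=f(\Sigma_k,\pi_k,\mathbf{H}_k)+\mathbf{W}$, starting from a given positive definite $\Sigma_0$. Problem 1: over scheduling policies $\pi=\{\pi_0,\ldots,\pi_{K-1}\}$ (with $\pi_k$ chosen based on $\Sigma_k$ and $\mathbf{H}_k$), minimize $$\mathbb{E}\Big[\sum_{k=0}^{K-1}\Big(\Tr(\Sigma_k)+\sum_{m=1}^M\gamma\Tr(\delta_{m,k}\mathbf{C}_m\mathbf{C}_m^T)\Big)+\Tr(\Sigma_K)\Big],$$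 where $\gamma>0$ trades off estimation accuracy against transmit power. $\mathbf{1}_{\{\cdot\}}$ is the indicator function. *)

theory Defs
  imports "HOL-Analysis.Analysis" "HOL-Probability.Probability"
begin

text \<open>Dimensions are types: state dimension S = CARD('s), transmit antennas
  N_t = CARD('t), receive antennas N_r = CARD('r), sensors M = CARD('m).
  A schedule pi_k is a function 'm => bool (delta_{m,k} = of_bool (pi m)).
  A channel realisation H_k is a function 'm => real^'t^'r (N_r x N_t matrices).
  Observation matrices C_m :: real^'s^'t (N_t x S).\<close>

definition pd_mat :: "real^'n^'n \<Rightarrow> bool" where
  "pd_mat S \<longleftrightarrow> transpose S = S \<and> (\<forall>x. x \<noteq> 0 \<longrightarrow> 0 < x \<bullet> (S *v x))"

definition eff_chan ::
  "('m::finite \<Rightarrow> real^'s^'t) \<Rightarrow> ('m \<Rightarrow> bool) \<Rightarrow> ('m \<Rightarrow> real^'t^'r) \<Rightarrow> real^'s^'r" where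
  "eff_chan C p H = (\<Sum>m\<in>UNIV. of_bool (p m) *\<^sub>R (H m ** C m))"

definition fmap ::
  "real^'s^'s \<Rightarrow> ('m::finite \<Rightarrow> real^'s^'t) \<Rightarrow> real^'s^'s \<Rightarrow> ('m \<Rightarrow> bool)
     \<Rightarrow> ('m \<Rightarrow> real^'t^'r) \<Rightarrow> real^'s^'s" where
  "fmap A C S p H =
     A ** matrix_inv (matrix_inv S + transpose (eff_chan C p H) ** eff_chan C p H) ** transpose A"

definition sched_cost :: "real \<Rightarrow> ('m::finite \<Rightarrow> real^'s^'t) \<Rightarrow> ('m \<Rightarrow> bool) \<Rightarrow> real" where
  "sched_cost \<gamma> C p = (\<Sum>m\<in>UNIV. \<gamma> * trace (of_bool (p m) *\<^sub>R (C m ** transpose (C m))))"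

definition chan_space :: "('m::finite \<Rightarrow> real^'t^'r) measure" where
  "chan_space = PiM UNIV (\<lambda>_. borel)"

definition gauss_chan :: "('m::finite \<Rightarrow> real^'t^'r) measure" where
  "gauss_chan =
     distr (PiM UNIV (\<lambda>_::'m \<times> 'r \<times> 't. density lborel std_normal_density))
           chan_space (\<lambda>g m. \<chi> i j. g (m, i, j))"

text \<open>Q-functions, indexed by the number n = K - k of remaining steps:
  Qr 0 = Q_K and Qr (Suc n) realises the recursion for Q_k with n = K - k - 1.
  The conditional expectation given M_k is the integral over the fresh channel
  H_{k+1} ~ gauss_chan, with Sigma_{k+1} = f(M_k) + W.\<close>
fun Qr :: "real^'s^'s \<Rightarrow> real^'s^'s \<Rightarrow> ('m::finite \<Rightarrow> real^'s^'t) \<Rightarrow> real \<Rightarrow> nat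
    \<Rightarrow> real^'s^'s \<Rightarrow> ('m \<Rightarrow> real^'t^'r) \<Rightarrow> ('m \<Rightarrow> bool) \<Rightarrow> real" where
  "Qr A W C \<gamma> 0 S H p = trace S"
| "Qr A W C \<gamma> (Suc n) S H p =
     trace S + sched_cost \<gamma> C p +
     (\<integral>H'. Min (range (\<lambda>p'. Qr A W C \<gamma> n (fmap A C S p H + W) H' p')) \<partial>gauss_chan)"

text \<open>Q_k for horizon K (meaningful for k <= K).\<close>
definition Qfun :: "real^'s^'s \<Rightarrow> real^'s^'s \<Rightarrow> ('m::finite \<Rightarrow> real^'s^'t) \<Rightarrow> real \<Rightarrow> nat \<Rightarrow> nat
    \<Rightarrow> real^'s^'s \<Rightarrow> ('m \<Rightarrow> real^'t^'r) \<Rightarrow> ('m \<Rightarrow> bool) \<Rightarrow> real" where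
  "Qfun A W C \<gamma> K k = Qr A W C \<gamma> (K - k)"

text \<open>Delta-functions, indexed by n = K - 1 - k: Dr 0 = Delta_{K-1} = 0.\<close>
fun Dr :: "real^'s^'s \<Rightarrow> real^'s^'s \<Rightarrow> ('m::finite \<Rightarrow> real^'s^'t) \<Rightarrow> real \<Rightarrow> nat
    \<Rightarrow> real^'s^'s \<Rightarrow> ('m \<Rightarrow> real^'t^'r) \<Rightarrow> ('m \<Rightarrow> bool) \<Rightarrow> real" where
  "Dr A W C \<gamma> 0 S H p = 0"
| "Dr A W C \<gamma> (Suc n) S H p =
     (\<integral>H'. Min (range (\<lambda>p'. sched_cost \<gamma> C p'
                  + trace (fmap A C (fmap A C S p H + W) p' H')
                  + Dr A W C \<gamma> n (fmap A C S p H + W) H' p')) \<partial>gauss_chan)"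

text \<open>Delta_k for horizon K (meaningful for k <= K - 1).\<close>
definition Delta :: "real^'s^'s \<Rightarrow> real^'s^'s \<Rightarrow> ('m::finite \<Rightarrow> real^'s^'t) \<Rightarrow> real \<Rightarrow> nat \<Rightarrow> nat
    \<Rightarrow> real^'s^'s \<Rightarrow> ('m \<Rightarrow> real^'t^'r) \<Rightarrow> ('m \<Rightarrow> bool) \<Rightarrow> real" where
  "Delta A W C \<gamma> K k = Dr A W C \<gamma> (K - 1 - k)"

text \<open>Scheduling policies: pi_k = pol k Sigma_k H_k (Markov policies, as in Problem 1).
  Admissible = jointly measurable in (Sigma_k, H_k).\<close>
definition adm_policy ::
  "(nat \<Rightarrow> real^'s^'s \<Rightarrow> ('m::finite \<Rightarrow> real^'t^'r) \<Rightarrow> ('m \<Rightarrow> bool)) \<Rightarrow> bool" where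
  "adm_policy pol \<longleftrightarrow>
     (\<forall>k. (\<lambda>(S, H). pol k S H) \<in> measurable (borel \<Otimes>\<^sub>M chan_space) (count_space UNIV))"

fun traj :: "real^'s^'s \<Rightarrow> real^'s^'s \<Rightarrow> ('m::finite \<Rightarrow> real^'s^'t)
    \<Rightarrow> (nat \<Rightarrow> real^'s^'s \<Rightarrow> ('m \<Rightarrow> real^'t^'r) \<Rightarrow> ('m \<Rightarrow> bool))
    \<Rightarrow> real^'s^'s \<Rightarrow> (nat \<Rightarrow> 'm \<Rightarrow> real^'t^'r) \<Rightarrow> nat \<Rightarrow> real^'s^'s" where
  "traj A W C pol S0 Hs 0 = S0"
| "traj A W C pol S0 Hs (Suc k) =
     fmap A C (traj A W C pol S0 Hs k) (pol k (traj A W C pol S0 Hs k) (Hs k)) (Hs k) + W"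

definition total_cost :: "real^'s^'s \<Rightarrow> real^'s^'s \<Rightarrow> ('m::finite \<Rightarrow> real^'s^'t) \<Rightarrow> real \<Rightarrow> nat
    \<Rightarrow> (nat \<Rightarrow> real^'s^'s \<Rightarrow> ('m \<Rightarrow> real^'t^'r) \<Rightarrow> ('m \<Rightarrow> bool))
    \<Rightarrow> real^'s^'s \<Rightarrow> (nat \<Rightarrow> 'm \<Rightarrow> real^'t^'r) \<Rightarrow> real" where
  "total_cost A W C \<gamma> K pol S0 Hs =
     (\<Sum>k<K. trace (traj A W C pol S0 Hs k)
             + sched_cost \<gamma> C (pol k (traj A W C pol S0 Hs k) (Hs k)))
     + trace (traj A W C pol S0 Hs K)"

definition cost_J :: "real^'s^'s \<Rightarrow> real^'s^'s \<Rightarrow> ('m::finite \<Rightarrow> real^'s^'t) \<Rightarrow> real \<Rightarrow> nat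
    \<Rightarrow> (nat \<Rightarrow> real^'s^'s \<Rightarrow> ('m \<Rightarrow> real^'t^'r) \<Rightarrow> ('m \<Rightarrow> bool))
    \<Rightarrow> real^'s^'s \<Rightarrow> real" where
  "cost_J A W C \<gamma> K pol S0 =
     (\<integral>Hs. total_cost A W C \<gamma> K pol S0 Hs \<partial>(PiM {..<K} (\<lambda>_. gauss_chan)))"

end

theory Submission
  imports Defs
begin


section \<open>Matrix facts\<close>

definition psd_mat :: "real^'n^'n \<Rightarrow> bool" where
  "psd_mat S \<longleftrightarrow> transpose S = S \<and> (\<forall>x. 0 \<le> x \<bullet> (S *v x))"

lemma inner_mat_transpose: "x \<bullet> (M *v y) = (transpose M *v x) \<bullet> y"
  for M :: "real^'n^'m"
  by (metis dot_lmul_matrix vector_transpose_matrix inner_commute)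

lemma inner_mat_sym: "transpose M = M \<Longrightarrow> x \<bullet> (M *v y) = y \<bullet> (M *v x)"
  for M :: "real^'n^'n"
  by (metis inner_mat_transpose inner_commute)

lemma inv_props:
  fixes X :: "real^'n^'n"
  assumes "invertible X"
  shows "X ** matrix_inv X = mat 1" "matrix_inv X ** X = mat 1"
proof -
  have "\<exists>A'. X ** A' = mat 1 \<and> A' ** X = mat 1" using assms unfolding invertible_def by blast
  from someI_ex[OF this] show "X ** matrix_inv X = mat 1" "matrix_inv X ** X = mat 1"
    unfolding matrix_inv_def by auto
qed

lemma pd_invertible:
  fixes X :: "real^'n^'n"
  assumes "pd_mat X" shows "invertible X"
proof -
  have "\<forall>x. X *v x = 0 \<longrightarrow> x = 0"
    using assms unfolding pd_mat_def by (metis inner_zero_right less_irrefl)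
  then show ?thesis using matrix_left_invertible_ker invertible_left_inverse by blast
qed

lemma inv_mulv1: "invertible X \<Longrightarrow> X *v (matrix_inv X *v x) = x"
  for X :: "real^'n^'n"
  by (simp add: matrix_vector_mul_assoc inv_props)

lemma inv_mulv2: "invertible X \<Longrightarrow> matrix_inv X *v (X *v x) = x"
  for X :: "real^'n^'n"
  by (simp add: matrix_vector_mul_assoc inv_props)

lemma inv_sym:
  fixes X :: "real^'n^'n"
  assumes "invertible X" "transpose X = X"
  shows "transpose (matrix_inv X) = matrix_inv X"
proof -
  have "transpose (matrix_inv X) ** X = mat 1"
    by (metis assms inv_props(1) matrix_transpose_mul transpose_mat)
  then have "transpose (matrix_inv X) ** X ** matrix_inv X = matrix_inv X"
    by simp
  moreover have "transpose (matrix_inv X) ** X ** matrix_inv X = transpose (matrix_inv X)"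
    by (metis matrix_mul_assoc inv_props(1)[OF assms(1)] matrix_mul_rid)
  ultimately show ?thesis by simp
qed

lemma pd_inv:
  fixes X :: "real^'n^'n"
  assumes "pd_mat X" shows "pd_mat (matrix_inv X)"
proof -
  have inv: "invertible X" using pd_invertible assms by blast
  have sym: "transpose X = X" using assms pd_mat_def by blast
  have "0 < x \<bullet> (matrix_inv X *v x)" if "x \<noteq> 0" for x
  proof -
    define y where "y = matrix_inv X *v x"
    have xy: "x = X *v y" using inv_mulv1[OF inv] y_def by simp
    then have "y \<noteq> 0" using that by auto
    then have "0 < y \<bullet> (X *v y)" using assms pd_mat_def by blast
    moreover have "x \<bullet> (matrix_inv X *v x) = y \<bullet> (X *v y)"
      unfolding y_def[symmetric] by (subst (1) xy) (simp add: inner_commute)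
    ultimately show ?thesis by simp
  qed
  then show ?thesis unfolding pd_mat_def using inv_sym[OF inv sym] by blast
qed

lemma pd_psd: "pd_mat X \<Longrightarrow> psd_mat X"
  unfolding pd_mat_def psd_mat_def by (metis inner_zero_left order_refl less_imp_le)

lemma gram_psd: "psd_mat (transpose E ** E)"
  for E :: "real^'n^'m"
proof -
  have "x \<bullet> ((transpose E ** E) *v x) = (E *v x) \<bullet> (E *v x)" for x
    by (metis inner_mat_transpose matrix_vector_mul_assoc transpose_transpose inner_commute)
  then show ?thesis unfolding psd_mat_def by (simp add: matrix_transpose_mul)
qed

lemma pd_add_psd: "pd_mat X \<Longrightarrow> psd_mat Y \<Longrightarrow> pd_mat (X + Y)"
  unfolding pd_mat_def psd_mat_def
  by (auto simp: transpose_def vec_eq_iff matrix_vector_mult_add_rdistrib inner_add_right add_pos_nonneg)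

lemma psd_add_pd: "psd_mat Y \<Longrightarrow> pd_mat X \<Longrightarrow> pd_mat (Y + X)"
  using pd_add_psd by (metis add.commute)

lemma psd_congr: "psd_mat P \<Longrightarrow> psd_mat (A ** P ** transpose A)"
  for A :: "real^'n^'m" and P :: "real^'n^'n"
proof -
  assume P: "psd_mat P"
  have "x \<bullet> ((A ** P ** transpose A) *v x) = (transpose A *v x) \<bullet> (P *v (transpose A *v x))" for x
    by (simp add: matrix_vector_mul_assoc[symmetric] inner_mat_transpose)
  moreover have "transpose (A ** P ** transpose A) = A ** P ** transpose A"
    using P unfolding psd_mat_def by (simp add: matrix_transpose_mul matrix_mul_assoc)
  ultimately show ?thesis using P unfolding psd_mat_def by simp
qed

lemma inv_le:
  fixes S G :: "real^'n^'n"
  assumes S: "pd_mat S" and G: "psd_mat G"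
  shows "x \<bullet> (matrix_inv (matrix_inv S + G) *v x) \<le> x \<bullet> (S *v x)"
proof -
  define Si where "Si = matrix_inv S"
  define N where "N = Si + G"
  have Sipd: "pd_mat Si" using pd_inv[OF S] Si_def by simp
  have Npd: "pd_mat N" using pd_add_psd[OF Sipd G] N_def by simp
  have Ninv: "invertible N" using pd_invertible[OF Npd] .
  have Sinv: "invertible S" using pd_invertible[OF S] .
  have Ssym: "transpose S = S" using S pd_mat_def by blast
  define y where "y = matrix_inv N *v x"
  have Ny: "N *v y = x" using inv_mulv1[OF Ninv] y_def by simp
  have "x \<bullet> y = y \<bullet> (N *v y)" using Ny by (simp add: inner_commute)
  also have "\<dots> = y \<bullet> (Si *v y) + y \<bullet> (G *v y)"
    by (simp add: N_def matrix_vector_mult_add_rdistrib inner_add_right)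
  finally have xy: "x \<bullet> y = y \<bullet> (Si *v y) + y \<bullet> (G *v y)" .
  have Gy: "0 \<le> y \<bullet> (G *v y)" using G psd_mat_def by blast
  define u where "u = Si *v y"
  have Su: "S *v u = y" using inv_mulv1[OF Sinv] u_def Si_def by simp
  have "0 \<le> (x - u) \<bullet> (S *v (x - u))"
    using pd_psd[OF S] psd_mat_def by blast
  also have "\<dots> = x \<bullet> (S *v x) - 2 * (x \<bullet> y) + u \<bullet> y"
  proof -
    have "u \<bullet> (S *v x) = x \<bullet> (S *v u)" using inner_mat_sym[OF Ssym] by blast
    then show ?thesis
      by (simp add: matrix_vector_mult_diff_distrib inner_diff_left inner_diff_right Su inner_commute)
  qed
  finally have "2 * (x \<bullet> y) - u \<bullet> y \<le> x \<bullet> (S *v x)" by simp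
  moreover have "u \<bullet> y = y \<bullet> (Si *v y)" by (simp add: u_def inner_commute)
  ultimately show ?thesis using xy Gy y_def N_def Si_def by simp
qed

lemma fmap_psd:
  assumes "pd_mat S" shows "psd_mat (fmap A C S p H)"
proof -
  have "pd_mat (matrix_inv S + transpose (eff_chan C p H) ** eff_chan C p H)"
    using pd_add_psd[OF pd_inv[OF assms] gram_psd] .
  then show ?thesis unfolding fmap_def using psd_congr pd_psd pd_inv by blast
qed

lemma trace_congr: "trace (A ** P ** transpose A) = (\<Sum>i\<in>UNIV. (A $ i) \<bullet> (P *v (A $ i)))"
  for A :: "real^'n^'m" and P :: "real^'n^'n"
  unfolding trace_def
proof (rule sum.cong[OF refl])
  fix i
  have "(A ** P ** transpose A) $ i $ i = (\<Sum>k\<in>UNIV. \<Sum>l\<in>UNIV. A$i$l * P$l$k * A$i$k)"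
    by (simp add: matrix_matrix_mult_def transpose_def sum_distrib_right)
  also have "\<dots> = (\<Sum>l\<in>UNIV. \<Sum>k\<in>UNIV. A$i$l * P$l$k * A$i$k)"
    by (rule sum.swap)
  also have "\<dots> = A $ i \<bullet> (P *v A $ i)"
    by (simp add: matrix_vector_mult_def inner_vec_def sum_distrib_left mult.assoc)
  finally show "(A ** P ** transpose A) $ i $ i = A $ i \<bullet> (P *v A $ i)" .
qed

lemma fmap_trace_le:
  assumes "pd_mat S" shows "trace (fmap A C S p H) \<le> trace (A ** S ** transpose A)"
  unfolding fmap_def trace_congr
  by (intro sum_mono inv_le assms gram_psd)

lemma psd_diag: "psd_mat P \<Longrightarrow> 0 \<le> P $ i $ i"
  unfolding psd_mat_def
  by (metis inner_axis' cart_eq_inner_axis matrix_vector_mult_basis column_def vec_lambda_beta axis_nth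
        inner_commute mult_1)

lemma psd_trace_nonneg: "psd_mat P \<Longrightarrow> 0 \<le> trace P"
  unfolding trace_def by (intro sum_nonneg psd_diag)

lemma qf_expand: "x \<bullet> (P *v x) = (\<Sum>k\<in>UNIV. \<Sum>l\<in>UNIV. x $ k * P $ k $ l * x $ l)"
  for P :: "real^'n^'n"
  by (simp add: matrix_vector_mult_def inner_vec_def sum_distrib_left mult_ac)

lemma psd_entry:
  fixes P :: "real^'n^'n"
  assumes P: "psd_mat P"
  shows "\<bar>P $ i $ j\<bar> \<le> trace P"
proof (cases "i = j")
  case True
  have "P $ j $ j \<le> (\<Sum>k\<in>UNIV. P $ k $ k)"
    by (rule member_le_sum) (auto intro: psd_diag[OF P])
  then show ?thesis using True psd_diag[OF P, of j] by (simp add: trace_def)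
next
  case False
  have sym: "P $ j $ i = P $ i $ j" using P unfolding psd_mat_def
    by (metis transpose_def vec_lambda_beta)
  define v :: "real^'n" where "v = axis i 1 + axis j 1"
  define w :: "real^'n" where "w = axis i 1 - axis j 1"
  have ax: "axis a 1 \<bullet> (P *v axis b 1) = P $ a $ b" for a b
    by (simp add: matrix_vector_mult_basis inner_axis' column_def)
  have "v \<bullet> (P *v v) = P $ i $ i + P $ j $ j + 2 * P $ i $ j"
    unfolding v_def using sym
    by (simp add: matrix_vector_right_distrib inner_add_left inner_add_right ax)
  moreover have "w \<bullet> (P *v w) = P $ i $ i + P $ j $ j - 2 * P $ i $ j"
    unfolding w_def using sym
    by (simp add: matrix_vector_mult_diff_distrib inner_diff_left inner_diff_right ax)
  moreover have "0 \<le> v \<bullet> (P *v v)" "0 \<le> w \<bullet> (P *v w)" using P psd_mat_def by blast+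
  moreover have "P $ i $ i + P $ j $ j \<le> trace P"
  proof -
    have "(\<Sum>k\<in>{i,j}. P $ k $ k) \<le> (\<Sum>k\<in>UNIV. P $ k $ k)"
      by (intro sum_mono2) (auto intro: psd_diag[OF P])
    then show ?thesis using False by (simp add: trace_def)
  qed
  moreover have "0 \<le> P $ i $ i" "0 \<le> P $ j $ j" using psd_diag[OF P] by auto
  ultimately show ?thesis by linarith
qed

lemma psd_qf_bound:
  fixes P :: "real^'n^'n"
  assumes P: "psd_mat P"
  shows "x \<bullet> (P *v x) \<le> trace P * (\<Sum>k\<in>UNIV. \<bar>x $ k\<bar>)\<^sup>2"
proof -
  have "x \<bullet> (P *v x) \<le> (\<Sum>k\<in>UNIV. \<Sum>l\<in>UNIV. \<bar>x $ k\<bar> * trace P * \<bar>x $ l\<bar>)"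
    unfolding qf_expand
  proof (intro sum_mono)
    fix k l
    have "x $ k * P $ k $ l * x $ l \<le> \<bar>x $ k * P $ k $ l * x $ l\<bar>" by simp
    also have "\<dots> = \<bar>x $ k\<bar> * \<bar>P $ k $ l\<bar> * \<bar>x $ l\<bar>" by (simp add: abs_mult)
    also have "\<dots> \<le> \<bar>x $ k\<bar> * trace P * \<bar>x $ l\<bar>"
      by (intro mult_right_mono mult_left_mono psd_entry P) auto
    finally show "x $ k * P $ k $ l * x $ l \<le> \<bar>x $ k\<bar> * trace P * \<bar>x $ l\<bar>" .
  qed
  also have "\<dots> = trace P * (\<Sum>k\<in>UNIV. \<bar>x $ k\<bar>)\<^sup>2"
    unfolding power2_eq_square sum_product sum_distrib_left
    by (intro sum.cong refl) (simp add: mult_ac sum_distrib_left)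
  finally show ?thesis .
qed

definition cA :: "real^'n^'m \<Rightarrow> real" where
  "cA A = (\<Sum>i\<in>UNIV. (\<Sum>k\<in>UNIV. \<bar>A $ i $ k\<bar>)\<^sup>2)"

lemma cA_nonneg: "0 \<le> cA A"
  unfolding cA_def by (intro sum_nonneg) auto

lemma trace_congr_bound:
  fixes A :: "real^'n^'m" and P :: "real^'n^'n"
  assumes P: "psd_mat P"
  shows "trace (A ** P ** transpose A) \<le> cA A * trace P"
proof -
  have "trace (A ** P ** transpose A) \<le> (\<Sum>i\<in>UNIV. trace P * (\<Sum>k\<in>UNIV. \<bar>A $ i $ k\<bar>)\<^sup>2)"
    unfolding trace_congr by (intro sum_mono psd_qf_bound P)
  then show ?thesis by (simp add: cA_def sum_distrib_left mult_ac)
qed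

section \<open>Measurability of matrix operations\<close>

lemma meas_vec_lambda[measurable (raw)]:
  fixes f :: "'i::finite \<Rightarrow> 'a \<Rightarrow> 'b::euclidean_space"
  assumes "\<And>i. f i \<in> borel_measurable M"
  shows "(\<lambda>x. \<chi> i. f i x) \<in> borel_measurable M"
proof (subst borel_measurable_euclidean_space, intro ballI)
  fix b :: "'b^'i" assume "b \<in> Basis"
  then obtain i u where b: "b = axis i u" "u \<in> Basis" unfolding Basis_vec_def by auto
  have "(\<lambda>x. (\<chi> i. f i x) \<bullet> b) = (\<lambda>x. f i x \<bullet> u)" using b by (simp add: inner_axis)
  then show "(\<lambda>x. (\<chi> i. f i x) \<bullet> b) \<in> borel_measurable M"
    using assms by simp
qed

lemma meas_vec_nth[measurable (raw)]:
  fixes f :: "'a \<Rightarrow> 'b::euclidean_space^'i::finite"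
  assumes "f \<in> borel_measurable M"
  shows "(\<lambda>x. f x $ i) \<in> borel_measurable M"
proof (subst borel_measurable_euclidean_space, intro ballI)
  fix u :: 'b assume "u \<in> Basis"
  have "(\<lambda>x. f x $ i \<bullet> u) = (\<lambda>x. f x \<bullet> axis i u)" by (simp add: inner_axis)
  then show "(\<lambda>x. f x $ i \<bullet> u) \<in> borel_measurable M"
    using assms by simp
qed

lemma meas_mmult[measurable (raw)]:
  fixes f :: "'a \<Rightarrow> real^'n^'m" and g :: "'a \<Rightarrow> real^'k^'n"
  assumes [measurable]: "f \<in> borel_measurable M" "g \<in> borel_measurable M"
  shows "(\<lambda>x. f x ** g x) \<in> borel_measurable M"
  unfolding matrix_matrix_mult_def by measurable

lemma meas_transpose[measurable (raw)]:
  fixes f :: "'a \<Rightarrow> real^'n^'m"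
  assumes [measurable]: "f \<in> borel_measurable M"
  shows "(\<lambda>x. transpose (f x)) \<in> borel_measurable M"
  unfolding transpose_def by measurable

lemma meas_det[measurable (raw)]:
  fixes f :: "'a \<Rightarrow> real^'n^'n"
  assumes [measurable]: "f \<in> borel_measurable M"
  shows "(\<lambda>x. det (f x)) \<in> borel_measurable M"
  unfolding det_def by measurable

lemma matrix_inv_formula:
  fixes X :: "real^'n^'n"
  shows "matrix_inv X = (if det X = 0 then (SOME A'::real^'n^'n. False)
     else (\<chi> i k. det (\<chi> a b. if b = i then mat 1 $ a $ k else X $ a $ b) / det X))"
proof (cases "det X = 0")
  case True
  then have "\<not> invertible X" using invertible_det_nz by blast
  then have "(\<lambda>A'. X ** A' = mat 1 \<and> A' ** X = mat 1) = (\<lambda>A'. False)"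
    unfolding invertible_def by auto
  then show ?thesis using True unfolding matrix_inv_def by simp
next
  case False
  then have inv: "invertible X" using invertible_det_nz by blast
  have "matrix_inv X $ i $ k = det (\<chi> a b. if b = i then mat 1 $ a $ k else X $ a $ b) / det X" for i k
  proof -
    have "X *v (\<chi> i. matrix_inv X $ i $ k) = (\<chi> a. mat 1 $ a $ k)"
      using inv_props(1)[OF inv]
      by (simp add: vec_eq_iff matrix_matrix_mult_def matrix_vector_mult_def)
    from this[unfolded cramer[OF False]] have
      "matrix_inv X $ i $ k = det (\<chi> ia j. if j = i then (\<chi> a. mat 1 $ a $ k) $ ia else X $ ia $ j) / det X"
      by (simp add: vec_eq_iff)
    moreover have "(\<chi> ia j. if j = i then (\<chi> a. mat 1 $ a $ k) $ ia else X $ ia $ j)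
       = (\<chi> a b. if b = i then mat 1 $ a $ k else (X $ a $ b :: real))" by (simp add: vec_eq_iff)
    ultimately show ?thesis by simp
  qed
  then show ?thesis using False by (simp add: vec_eq_iff)
qed

lemma meas_matrix_inv[measurable (raw)]:
  fixes f :: "'a \<Rightarrow> real^'n^'n"
  assumes [measurable]: "f \<in> borel_measurable M"
  shows "(\<lambda>x. matrix_inv (f x)) \<in> borel_measurable M"
  unfolding matrix_inv_formula by measurable



lemma sets_gauss: "sets (gauss_chan :: ('m::finite \<Rightarrow> real^'t^'r) measure) = sets chan_space"
  unfolding gauss_chan_def by simp

lemma meas_gauss_eq: "measurable M (gauss_chan :: ('m::finite \<Rightarrow> real^'t^'r) measure) = measurable M chan_space"
  by (rule measurable_cong_sets[OF refl sets_gauss])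

lemma meas_gauss_eq2: "measurable (gauss_chan :: ('m::finite \<Rightarrow> real^'t^'r) measure) N = measurable chan_space N"
  by (rule measurable_cong_sets[OF sets_gauss refl])

lemma gauss_prob: "prob_space (gauss_chan :: ('m::finite \<Rightarrow> real^'t^'r) measure)"
proof -
  let ?P = "PiM (UNIV :: ('m \<times> 'r \<times> 't) set) (\<lambda>_. density lborel std_normal_density)"
  have "prob_space ?P"
    by (intro prob_space_PiM) (simp add: prob_space_normal_density)
  moreover have "(\<lambda>g m. \<chi> i j. g (m, i, j)) \<in> measurable ?P (chan_space :: ('m \<Rightarrow> real^'t^'r) measure)"
    unfolding chan_space_def
  proof (rule measurable_PiM_single')
    fix m :: 'm
    show "(\<lambda>g. (\<lambda>m. \<chi> i j. g (m, i, j)) m) \<in> borel_measurable ?P"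
      by measurable
  qed auto
  ultimately show ?thesis unfolding gauss_chan_def by (rule prob_space.prob_space_distr)
qed

lemma trace_scaleR: "trace (c *\<^sub>R X) = c * trace X"
  for X :: "real^'n^'n"
  by (simp add: trace_def sum_distrib_left)

lemma trace_gram_nonneg: "0 \<le> trace (X ** transpose X)"
  for X :: "real^'n^'m"
  using psd_trace_nonneg[OF gram_psd[of "transpose X"]] by simp

lemma pd_trace_nonneg: "pd_mat S \<Longrightarrow> 0 \<le> trace S"
  using psd_trace_nonneg pd_psd by blast

lemma meas_eff_chan[measurable (raw)]:
  fixes h :: "'a \<Rightarrow> ('m::finite \<Rightarrow> real^'t^'r)"
  assumes [measurable]: "h \<in> measurable M chan_space"
  shows "(\<lambda>x. eff_chan C p (h x)) \<in> borel_measurable M"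
proof -
  have [measurable]: "(\<lambda>x. h x m) \<in> borel_measurable M" for m
    using measurable_component_singleton[of m UNIV "\<lambda>_. borel"] assms
    unfolding chan_space_def by (simp add: measurable_compose[of h])
  show ?thesis unfolding eff_chan_def by measurable
qed

lemma meas_fmap[measurable (raw)]:
  fixes h :: "'a \<Rightarrow> ('m::finite \<Rightarrow> real^'t^'r)"
  assumes [measurable]: "h \<in> measurable M chan_space" "f \<in> borel_measurable M"
  shows "(\<lambda>x. fmap A C (f x) p (h x)) \<in> borel_measurable M"
  unfolding fmap_def by measurable

lemma snd_chan[measurable]: "snd \<in> measurable (N \<Otimes>\<^sub>M gauss_chan) chan_space"
  using measurable_snd meas_gauss_eq by blast

lemma meas_trace[measurable (raw)]:
  fixes f :: "'a \<Rightarrow> real^'n^'n"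
  assumes [measurable]: "f \<in> borel_measurable M"
  shows "(\<lambda>x. trace (f x)) \<in> borel_measurable M"
  unfolding trace_def by measurable

lemma Min_add_const: "Min (range (\<lambda>p. c + h p)) = c + Min (range h)"
  for h :: "'a::finite \<Rightarrow> real"
proof -
  have "Min (range (\<lambda>p. c + h p)) = Min ((+) c ` range h)" by (simp add: image_image)
  also have "\<dots> = c + Min (range h)"
    by (intro mono_Min_commute[symmetric]) (auto simp: mono_def)
  finally show ?thesis .
qed

lemma Min_at_min: "(\<forall>p'. h p \<le> h p') \<Longrightarrow> Min (range h) = h p"
  for h :: "'a::finite \<Rightarrow> real"
  by (intro antisym Min_le) (auto intro: Min.boundedI)

lemma Min_range_const: "Min (range (\<lambda>p::'a::finite. c)) = (c::real)"
  by simp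

definition good :: "(real^'s^'s \<Rightarrow> real) \<Rightarrow> bool" where
  "good g \<longleftrightarrow> g \<in> borel_measurable borel \<and>
     (\<exists>a b. 0 \<le> b \<and> (\<forall>S. pd_mat S \<longrightarrow> 0 \<le> g S \<and> g S \<le> a + b * trace S))"

context
  fixes A W :: "real^'s^'s" and C :: "'m::finite \<Rightarrow> real^'s^'t" and \<gamma> :: real
    and \<mu> :: "('m \<Rightarrow> real^'t^'r) measure"
  assumes gamma_pos: "\<gamma> > 0" and W_pd: "pd_mat W" and mu_def: "\<mu> = gauss_chan"
begin

lemma mu_prob: "prob_space \<mu>" using gauss_prob mu_def by simp

lemma mu_fin: "finite_measure \<mu>" using mu_prob prob_space_def by blast

lemma mu_measure1: "measure \<mu> (space \<mu>) = 1" using prob_space.prob_space[OF mu_prob] by simp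

lemma int_const_mu: "(\<integral>H. c \<partial>\<mu>) = (c::real)"
  by (simp add: mu_measure1)

lemma int_good:
  fixes F :: "real^'s^'s \<Rightarrow> ('m \<Rightarrow> real^'t^'r) \<Rightarrow> real"
  assumes Fm[measurable]: "case_prod F \<in> borel_measurable (borel \<Otimes>\<^sub>M \<mu>)"
    and Fb: "\<And>S H. pd_mat S \<Longrightarrow> 0 \<le> F S H \<and> F S H \<le> a + b * trace S"
  shows "(\<lambda>S. \<integral>H. F S H \<partial>\<mu>) \<in> borel_measurable borel"
    and "pd_mat S \<Longrightarrow> integrable \<mu> (F S)"
    and "pd_mat S \<Longrightarrow> 0 \<le> (\<integral>H. F S H \<partial>\<mu>) \<and> (\<integral>H. F S H \<partial>\<mu>) \<le> a + b * trace S"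
proof -
  interpret prob_space \<mu> by (rule mu_prob)
  show "(\<lambda>S. \<integral>H. F S H \<partial>\<mu>) \<in> borel_measurable borel"
    by (rule borel_measurable_lebesgue_integral[OF Fm])
  have Fs: "F S \<in> borel_measurable \<mu>" for S
  proof -
    have "(\<lambda>H. case_prod F (S, H)) \<in> borel_measurable \<mu>" by measurable
    then show ?thesis by simp
  qed
  assume S: "pd_mat S"
  show int: "integrable \<mu> (F S)"
    using Fb[OF S] by (intro integrable_const_bound[where B="a + b * trace S"] Fs) auto
  have "(\<integral>H. F S H \<partial>\<mu>) \<le> (\<integral>H. (a + b * trace S) \<partial>\<mu>)"
    using Fb[OF S] int by (intro integral_mono) auto
  then have "(\<integral>H. F S H \<partial>\<mu>) \<le> a + b * trace S" by (simp add: prob_space)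
  moreover have "0 \<le> (\<integral>H. F S H \<partial>\<mu>)" using Fb[OF S] by (intro Bochner_Integration.integral_nonneg) auto
  ultimately show "0 \<le> (\<integral>H. F S H \<partial>\<mu>) \<and> (\<integral>H. F S H \<partial>\<mu>) \<le> a + b * trace S" by simp
qed

lemma snd_mu[measurable]: "snd \<in> measurable (N \<Otimes>\<^sub>M \<mu>) chan_space"
  using snd_chan mu_def by simp

definition scmax :: real where "scmax = sched_cost \<gamma> C (\<lambda>_. True)"

lemma sched_bounds: "0 \<le> sched_cost \<gamma> C p \<and> sched_cost \<gamma> C p \<le> scmax"
proof -
  have e: "sched_cost \<gamma> C q = (\<Sum>m\<in>UNIV. \<gamma> * (of_bool (q m) * trace (C m ** transpose (C m))))" for q
    unfolding sched_cost_def by (simp add: trace_scaleR)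
  have t: "0 \<le> trace (C m ** transpose (C m))" for m by (rule trace_gram_nonneg)
  show ?thesis unfolding scmax_def e using gamma_pos t
    by (auto intro!: sum_nonneg sum_mono mult_left_mono mult_nonneg_nonneg)
qed

lemma fW_pd: "pd_mat S \<Longrightarrow> pd_mat (fmap A C S p H + W)"
  using psd_add_pd[OF fmap_psd W_pd] by blast

lemma fW_tr: "pd_mat S \<Longrightarrow> trace (fmap A C S p H + W) \<le> cA A * trace S + trace W"
  unfolding trace_add
  using fmap_trace_le[of S A C p H] trace_congr_bound[OF pd_psd, of S A] by simp

definition Vop :: "(real^'s^'s \<Rightarrow> real) \<Rightarrow> real^'s^'s \<Rightarrow> real" where
  "Vop g S = (\<integral>H. Min (range (\<lambda>p. trace S + sched_cost \<gamma> C p + g (fmap A C S p H + W))) \<partial>\<mu>)"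

definition Top :: "(nat \<Rightarrow> real^'s^'s \<Rightarrow> ('m \<Rightarrow> real^'t^'r) \<Rightarrow> ('m \<Rightarrow> bool)) \<Rightarrow> nat
    \<Rightarrow> (real^'s^'s \<Rightarrow> real) \<Rightarrow> real^'s^'s \<Rightarrow> real" where
  "Top pol N g S = (\<integral>H. trace S + sched_cost \<gamma> C (pol N S H) + g (fmap A C S (pol N S H) H + W) \<partial>\<mu>)"

definition Wn :: "nat \<Rightarrow> real^'s^'s \<Rightarrow> real" where
  "Wn n S = (\<integral>H. Min (range (\<lambda>p. Qr A W C \<gamma> n S H p)) \<partial>\<mu>)"

lemma step_bound:
  assumes g: "\<forall>S. pd_mat S \<longrightarrow> 0 \<le> g S \<and> g S \<le> a + b * trace S" and b: "0 \<le> b" and S: "pd_mat S"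
  shows "0 \<le> trace S + sched_cost \<gamma> C p + g (fmap A C S p H + W)
     \<and> trace S + sched_cost \<gamma> C p + g (fmap A C S p H + W)
        \<le> (scmax + a + b * trace W) + (1 + b * cA A) * trace S"
proof -
  have 1: "0 \<le> trace S" using pd_trace_nonneg[OF S] .
  have 2: "0 \<le> g (fmap A C S p H + W)" "g (fmap A C S p H + W) \<le> a + b * trace (fmap A C S p H + W)"
    using g fW_pd[OF S] by auto
  have 3: "b * trace (fmap A C S p H + W) \<le> b * (cA A * trace S + trace W)"
    using fW_tr[OF S] b by (intro mult_left_mono) auto
  show ?thesis using 1 2 3 sched_bounds[of p] by (simp add: algebra_simps)
qed

lemma good_Vop:
  assumes gg: "good g"
  shows "good (Vop g)"
    and "pd_mat S \<Longrightarrow> integrable \<mu> (\<lambda>H. Min (range (\<lambda>p. trace S + sched_cost \<gamma> C p + g (fmap A C S p H + W))))"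
proof -
  from gg obtain a b where gm[measurable]: "g \<in> borel_measurable borel" and b: "0 \<le> b"
    and g: "\<forall>S. pd_mat S \<longrightarrow> 0 \<le> g S \<and> g S \<le> a + b * trace S"
    unfolding good_def by blast
  define F where "F S (H :: 'm \<Rightarrow> real^'t^'r) = Min (range (\<lambda>p. trace S + sched_cost \<gamma> C p + g (fmap A C S p H + W)))" for S H
  have Fm: "case_prod F \<in> borel_measurable (borel \<Otimes>\<^sub>M \<mu>)"
  proof -
    have "(\<lambda>x. Min ((\<lambda>p. trace (fst x) + sched_cost \<gamma> C p + g (fmap A C (fst x) p (snd x) + W)) ` UNIV))
       \<in> borel_measurable (borel \<Otimes>\<^sub>M \<mu>)"
      by measurable
    then show ?thesis unfolding F_def by (simp add: case_prod_beta')
  qed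
  have Fb: "0 \<le> F S H \<and> F S H \<le> (scmax + a + b * trace W) + (1 + b * cA A) * trace S" if S: "pd_mat S" for S H
  proof -
    have "0 \<le> F S H" unfolding F_def using step_bound[OF g b S] by (auto intro!: Min.boundedI)
    moreover have "F S H \<le> trace S + sched_cost \<gamma> C (\<lambda>_. True) + g (fmap A C S (\<lambda>_. True) H + W)"
      unfolding F_def by (intro Min_le) auto
    ultimately show ?thesis using step_bound[OF g b S, of "\<lambda>_. True" H] by linarith
  qed
  note ig = int_good[OF Fm Fb]
  have "0 \<le> 1 + b * cA A" using mult_nonneg_nonneg[OF b cA_nonneg[of A]] by linarith
  then show "good (Vop g)" unfolding good_def Vop_def using ig(1) ig(3) unfolding F_def by blast
  show "pd_mat S \<Longrightarrow> integrable \<mu> (\<lambda>H. Min (range (\<lambda>p. trace S + sched_cost \<gamma> C p + g (fmap A C S p H + W))))"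
    using ig(2) unfolding F_def by blast
qed

lemma pol_meas:
  fixes pol :: "nat \<Rightarrow> real^'s^'s \<Rightarrow> ('m \<Rightarrow> real^'t^'r) \<Rightarrow> ('m \<Rightarrow> bool)"
  assumes "adm_policy pol"
  shows "(\<lambda>x. pol N (fst x) (snd x)) \<in> measurable (borel \<Otimes>\<^sub>M \<mu>) (count_space UNIV)"
proof -
  have "sets (borel \<Otimes>\<^sub>M \<mu>) = sets (borel \<Otimes>\<^sub>M (chan_space :: ('m \<Rightarrow> real^'t^'r) measure))"
    using sets_pair_measure_cong[OF refl sets_gauss] mu_def by simp
  then have eq: "measurable (borel \<Otimes>\<^sub>M \<mu>) (count_space UNIV) =
     measurable (borel \<Otimes>\<^sub>M (chan_space :: ('m \<Rightarrow> real^'t^'r) measure)) (count_space (UNIV :: ('m \<Rightarrow> bool) set))"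
    by (rule measurable_cong_sets) simp
  have "(\<lambda>(S, H). pol N S H) \<in> measurable (borel \<Otimes>\<^sub>M chan_space) (count_space UNIV)"
    using assms unfolding adm_policy_def by blast
  then have "(\<lambda>(S, H). pol N S H) \<in> measurable (borel \<Otimes>\<^sub>M \<mu>) (count_space UNIV)"
    unfolding eq .
  then show ?thesis by (simp add: case_prod_beta')
qed

lemma good_Top:
  assumes pol: "adm_policy pol" and gg: "good g"
  shows "good (Top pol N g)"
    and "pd_mat S \<Longrightarrow> integrable \<mu> (\<lambda>H. trace S + sched_cost \<gamma> C (pol N S H) + g (fmap A C S (pol N S H) H + W))"
proof -
  from gg obtain a b where gm[measurable]: "g \<in> borel_measurable borel" and b: "0 \<le> b"
    and g: "\<forall>S. pd_mat S \<longrightarrow> 0 \<le> g S \<and> g S \<le> a + b * trace S"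
    unfolding good_def by blast
  define F where "F S (H :: 'm \<Rightarrow> real^'t^'r) = trace S + sched_cost \<gamma> C (pol N S H) + g (fmap A C S (pol N S H) H + W)" for S H
  have Fm: "case_prod F \<in> borel_measurable (borel \<Otimes>\<^sub>M \<mu>)"
  proof -
    have "(\<lambda>x. (\<lambda>q x. trace (fst x) + sched_cost \<gamma> C q + g (fmap A C (fst x) q (snd x) + W))
             (pol N (fst x) (snd x)) x) \<in> borel_measurable (borel \<Otimes>\<^sub>M \<mu>)"
      by (rule measurable_compose_countable'[OF _ pol_meas[OF pol]]) auto
    then show ?thesis unfolding F_def by (simp add: case_prod_beta')
  qed
  have Fb: "0 \<le> F S H \<and> F S H \<le> (scmax + a + b * trace W) + (1 + b * cA A) * trace S" if S: "pd_mat S" for S H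
    unfolding F_def using step_bound[OF g b S] by blast
  note ig = int_good[OF Fm Fb]
  have "0 \<le> 1 + b * cA A" using mult_nonneg_nonneg[OF b cA_nonneg[of A]] by linarith
  then show "good (Top pol N g)" unfolding good_def Top_def using ig(1) ig(3) unfolding F_def by blast
  show "pd_mat S \<Longrightarrow> integrable \<mu> (\<lambda>H. trace S + sched_cost \<gamma> C (pol N S H) + g (fmap A C S (pol N S H) H + W))"
    using ig(2) unfolding F_def by blast
qed

lemma Top_ge_Vop:
  assumes pol: "adm_policy pol" and gg: "good g" and S: "pd_mat S"
  shows "Vop g S \<le> Top pol N g S"
  unfolding Vop_def Top_def
  by (intro integral_mono good_Vop(2)[OF gg S] good_Top(2)[OF pol gg S] Min_le) auto

lemma Top_eq_Vop:
  assumes S: "pd_mat S"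
    and opt: "\<And>H p. trace S + sched_cost \<gamma> C (pol N S H) + g (fmap A C S (pol N S H) H + W)
                   \<le> trace S + sched_cost \<gamma> C p + g (fmap A C S p H + W)"
  shows "Top pol N g S = Vop g S"
  unfolding Vop_def Top_def
  by (intro Bochner_Integration.integral_cong refl Min_at_min[symmetric]) (use opt in auto)

lemma Wn_0: "Wn 0 S = trace S"
  unfolding Wn_def by (simp add: mu_measure1)

lemma Qr_Suc: "Qr A W C \<gamma> (Suc n) S (H :: 'm \<Rightarrow> real^'t^'r) p = trace S + sched_cost \<gamma> C p + Wn n (fmap A C S p H + W)"
  unfolding Qr.simps Wn_def by (simp add: mu_def)

lemma Wn_Suc: "Wn (Suc n) S = Vop (Wn n) S"
  unfolding Wn_def Vop_def Qr_Suc ..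

lemma good_Wn: "good (Wn n)"
proof (induction n)
  case 0
  have "Wn 0 = trace" using Wn_0 by auto
  then show ?case unfolding good_def
    by (auto intro!: exI[of _ 0] exI[of _ 1] pd_trace_nonneg)
next
  case (Suc n)
  have "Wn (Suc n) = Vop (Wn n)" using Wn_Suc by auto
  then show ?case using good_Vop(1)[OF Suc] by simp
qed

lemma Qr_formula:
  assumes "pd_mat S"
  shows "Qr A W C \<gamma> (Suc n) S (H :: 'm \<Rightarrow> real^'t^'r) p = trace S + sched_cost \<gamma> C p + trace (fmap A C S p H)
           + real (Suc n) * trace W + Dr A W C \<gamma> n S H p"
  using assms
proof (induction n arbitrary: S H p)
  case 0
  show ?case unfolding Qr_Suc Wn_0 by (simp add: trace_add)
next
  case (Suc n)
  define S' where "S' = fmap A C S p H + W"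
  have S'pd: "pd_mat S'" using fW_pd[OF Suc.prems] S'_def by simp
  define c where "c = trace S' + real (Suc n) * trace W"
  define h where "h H' p' = sched_cost \<gamma> C p' + trace (fmap A C S' p' H') + Dr A W C \<gamma> n S' H' p'"
    for H' :: "'m \<Rightarrow> real^'t^'r" and p'
  have IH: "Qr A W C \<gamma> (Suc n) S' H' p' = c + h H' p'" for H' p'
    using Suc.IH[OF S'pd, of H' p'] unfolding c_def h_def by simp
  have MinQ: "Min (range (Qr A W C \<gamma> (Suc n) S' H')) = c + Min (range (h H'))" for H'
    using Min_add_const[of c "h H'"] IH by (simp add: IH)
  have intQ: "integrable \<mu> (\<lambda>H'. Min (range (Qr A W C \<gamma> (Suc n) S' H')))"
    using good_Vop(2)[OF good_Wn S'pd, of n] unfolding Qr_Suc .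
  have inth: "integrable \<mu> (\<lambda>H'. Min (range (h H')))"
  proof -
    have "integrable \<mu> (\<lambda>H'. Min (range (Qr A W C \<gamma> (Suc n) S' H')) - c)"
      by (rule Bochner_Integration.integrable_diff[OF intQ finite_measure.integrable_const[OF mu_fin]])
    then show ?thesis using MinQ by simp
  qed
  have "Wn (Suc n) S' = (\<integral>H'. c + Min (range (h H')) \<partial>\<mu>)"
    unfolding Wn_def using MinQ by simp
  also have "\<dots> = c + (\<integral>H'. Min (range (h H')) \<partial>\<mu>)"
    using Bochner_Integration.integral_add[OF finite_measure.integrable_const[OF mu_fin] inth, of c]
    by (simp add: mu_measure1)
  also have "(\<integral>H'. Min (range (h H')) \<partial>\<mu>) = Dr A W C \<gamma> (Suc n) S H p"
    unfolding h_def S'_def by (simp add: mu_def)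
  finally have "Wn (Suc n) S' = c + Dr A W C \<gamma> (Suc n) S H p" .
  then show ?case unfolding Qr_Suc[of "Suc n"] S'_def[symmetric]
    by (simp add: c_def S'_def trace_add algebra_simps)
qed

section \<open>Trajectories\<close>

lemma traj_cong: "(\<And>i. i < k \<Longrightarrow> Hs i = Hs' i) \<Longrightarrow> traj A W C pol S0 Hs k = traj A W C pol S0 Hs' k"
  by (induction k) auto

lemma traj_pd: "pd_mat S0 \<Longrightarrow> pd_mat (traj A W C pol S0 Hs k)"
  by (induction k) (auto intro: fW_pd)

lemma traj_bound: "pd_mat S0 \<Longrightarrow> \<exists>B. \<forall>Hs. trace (traj A W C pol S0 Hs k) \<le> B"
proof (induction k)
  case 0
  then show ?case by auto
next
  case (Suc k)
  then obtain B where B: "\<forall>Hs. trace (traj A W C pol S0 Hs k) \<le> B" by blast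
  have "trace (traj A W C pol S0 Hs (Suc k)) \<le> cA A * B + trace W" for Hs
  proof -
    have "trace (traj A W C pol S0 Hs (Suc k)) \<le> cA A * trace (traj A W C pol S0 Hs k) + trace W"
      using fW_tr[OF traj_pd[OF Suc.prems]] by simp
    also have "\<dots> \<le> cA A * B + trace W"
      using B cA_nonneg[of A] by (simp add: mult_left_mono)
    finally show ?thesis .
  qed
  then show ?case by blast
qed

abbreviation PM :: "nat \<Rightarrow> (nat \<Rightarrow> 'm \<Rightarrow> real^'t^'r) measure" where
  "PM N \<equiv> PiM {..<N} (\<lambda>_. \<mu>)"

lemma PM_prob: "prob_space (PM N)"
  by (intro prob_space_PiM mu_prob)

lemma comp_chan:
  assumes "k < N"
  shows "(\<lambda>Hs. Hs k) \<in> measurable (PM N) chan_space"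
proof -
  have "(\<lambda>Hs. Hs k) \<in> measurable (PM N) \<mu>"
    using measurable_component_singleton[of k "{..<N}" "\<lambda>_. \<mu>"] assms by simp
  then show ?thesis unfolding mu_def meas_gauss_eq .
qed

lemma comp_mu:
  assumes "k < N"
  shows "(\<lambda>Hs. Hs k) \<in> measurable (PM N) \<mu>"
  using measurable_component_singleton[of k "{..<N}" "\<lambda>_. \<mu>"] assms by simp

lemma pol_traj_meas:
  fixes pol :: "nat \<Rightarrow> real^'s^'s \<Rightarrow> ('m \<Rightarrow> real^'t^'r) \<Rightarrow> ('m \<Rightarrow> bool)"
  assumes pol: "adm_policy pol" and k: "k < N"
    and f: "f \<in> borel_measurable (PM N)"
  shows "(\<lambda>Hs. pol k (f Hs) (Hs k)) \<in> measurable (PM N) (count_space UNIV)"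
proof -
  have "(\<lambda>Hs. (f Hs, Hs k)) \<in> measurable (PM N) (borel \<Otimes>\<^sub>M \<mu>)"
    using f comp_mu[OF k] by (intro measurable_Pair)
  from measurable_compose[OF this pol_meas[OF pol]] show ?thesis by simp
qed

lemma traj_meas:
  fixes pol :: "nat \<Rightarrow> real^'s^'s \<Rightarrow> ('m \<Rightarrow> real^'t^'r) \<Rightarrow> ('m \<Rightarrow> bool)"
  assumes pol: "adm_policy pol"
  shows "k \<le> N \<Longrightarrow> (\<lambda>Hs. traj A W C pol S0 Hs k) \<in> borel_measurable (PM N)"
proof (induction k)
  case 0
  then show ?case by simp
next
  case (Suc k)
  then have k: "k < N" by simp
  have IH[measurable]: "(\<lambda>Hs. traj A W C pol S0 Hs k) \<in> borel_measurable (PM N)" using Suc by simp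
  have [measurable]: "(\<lambda>Hs. Hs k) \<in> measurable (PM N) chan_space" using comp_chan[OF k] .
  have "(\<lambda>Hs. (\<lambda>q Hs. fmap A C (traj A W C pol S0 Hs k) q (Hs k) + W)
      (pol k (traj A W C pol S0 Hs k) (Hs k)) Hs) \<in> borel_measurable (PM N)"
    by (rule measurable_compose_countable'[OF _ pol_traj_meas[OF pol k IH]]) auto
  then show ?case by simp
qed

definition integrand :: "(nat \<Rightarrow> real^'s^'s \<Rightarrow> ('m \<Rightarrow> real^'t^'r) \<Rightarrow> ('m \<Rightarrow> bool)) \<Rightarrow> real^'s^'s
    \<Rightarrow> nat \<Rightarrow> (real^'s^'s \<Rightarrow> real) \<Rightarrow> (nat \<Rightarrow> 'm \<Rightarrow> real^'t^'r) \<Rightarrow> real" where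
  "integrand pol S0 N g Hs =
     (\<Sum>k<N. trace (traj A W C pol S0 Hs k) + sched_cost \<gamma> C (pol k (traj A W C pol S0 Hs k) (Hs k)))
     + g (traj A W C pol S0 Hs N)"

definition costN :: "(nat \<Rightarrow> real^'s^'s \<Rightarrow> ('m \<Rightarrow> real^'t^'r) \<Rightarrow> ('m \<Rightarrow> bool)) \<Rightarrow> real^'s^'s
    \<Rightarrow> nat \<Rightarrow> (real^'s^'s \<Rightarrow> real) \<Rightarrow> real" where
  "costN pol S0 N g = (\<integral>Hs. integrand pol S0 N g Hs \<partial>PM N)"

lemma integrand_int:
  assumes pol: "adm_policy pol" and S0: "pd_mat S0" and gg: "good g"
  shows "integrable (PM N) (integrand pol S0 N g)"
proof -
  from gg obtain a b where gm[measurable]: "g \<in> borel_measurable borel" and b: "0 \<le> b"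
    and g: "\<forall>S. pd_mat S \<longrightarrow> 0 \<le> g S \<and> g S \<le> a + b * trace S"
    unfolding good_def by blast
  have "\<forall>k. \<exists>B. \<forall>Hs. trace (traj A W C pol S0 Hs k) \<le> B" using traj_bound[OF S0] by blast
  then obtain Bf where Bf: "\<And>k Hs. trace (traj A W C pol S0 Hs k) \<le> Bf k" by metis
  have tm[measurable]: "(\<lambda>Hs. traj A W C pol S0 Hs k) \<in> borel_measurable (PM N)" if "k \<le> N" for k
    using traj_meas[OF pol that] .
  have sm: "(\<lambda>Hs. sched_cost \<gamma> C (pol k (traj A W C pol S0 Hs k) (Hs k))) \<in> borel_measurable (PM N)"
    if "k < N" for k
  proof -
    have "(\<lambda>Hs. (\<lambda>q Hs. sched_cost \<gamma> C q) (pol k (traj A W C pol S0 Hs k) (Hs k)) Hs) \<in> borel_measurable (PM N)"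
      by (rule measurable_compose_countable'[OF _ pol_traj_meas[OF pol that tm]]) (use that in auto)
    then show ?thesis by simp
  qed
  have meas: "integrand pol S0 N g \<in> borel_measurable (PM N)"
    unfolding integrand_def
    by (intro borel_measurable_add borel_measurable_sum measurable_compose[OF tm gm] meas_trace tm sm) auto
  have bnd: "norm (integrand pol S0 N g Hs) \<le> (\<Sum>k<N. Bf k + scmax) + a + b * Bf N" for Hs
  proof -
    have t0: "0 \<le> trace (traj A W C pol S0 Hs k)" for k using pd_trace_nonneg[OF traj_pd[OF S0]] .
    have s: "0 \<le> (\<Sum>k<N. trace (traj A W C pol S0 Hs k) + sched_cost \<gamma> C (pol k (traj A W C pol S0 Hs k) (Hs k)))"
      using t0 sched_bounds by (intro sum_nonneg) (auto intro: add_nonneg_nonneg)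
    have s2: "(\<Sum>k<N. trace (traj A W C pol S0 Hs k) + sched_cost \<gamma> C (pol k (traj A W C pol S0 Hs k) (Hs k)))
        \<le> (\<Sum>k<N. Bf k + scmax)"
      using Bf sched_bounds by (intro sum_mono add_mono) auto
    have g1: "0 \<le> g (traj A W C pol S0 Hs N)" "g (traj A W C pol S0 Hs N) \<le> a + b * trace (traj A W C pol S0 Hs N)"
      using g traj_pd[OF S0] by auto
    have g2: "b * trace (traj A W C pol S0 Hs N) \<le> b * Bf N" using Bf b by (intro mult_left_mono) auto
    show ?thesis unfolding integrand_def using s s2 g1 g2 by simp
  qed
  show ?thesis
    by (rule finite_measure.integrable_const_bound[OF prob_space.finite_measure[OF PM_prob]])
       (use bnd meas in auto)
qed

lemma integrand_nonneg_pd: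
  assumes S0: "pd_mat S0" shows "pd_mat (traj A W C pol S0 Hs N)"
  using traj_pd[OF S0] .

lemma costN_0: "costN pol S0 0 g = g S0"
proof -
  have "costN pol S0 0 g = (\<integral>Hs. g S0 \<partial>PM 0)" unfolding costN_def integrand_def by simp
  also have "\<dots> = g S0" using prob_space.prob_space[OF PM_prob[of 0]] by simp
  finally show ?thesis .
qed

lemma costN_Suc:
  assumes pol: "adm_policy pol" and S0: "pd_mat S0" and gg: "good g"
  shows "costN pol S0 (Suc N) g = costN pol S0 N (Top pol N g)"
proof -
  interpret product_sigma_finite "\<lambda>_::nat. \<mu>"
    unfolding product_sigma_finite_def using prob_space_imp_sigma_finite[OF mu_prob] by simp
  have int: "integrable (PiM (insert N {..<N}) (\<lambda>_. \<mu>)) (integrand pol S0 (Suc N) g)"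
    using integrand_int[OF pol S0 gg, of "Suc N"] by (simp add: lessThan_Suc)
  have "costN pol S0 (Suc N) g = (\<integral>Hs. integrand pol S0 (Suc N) g Hs \<partial>PiM (insert N {..<N}) (\<lambda>_. \<mu>))"
    unfolding costN_def by (simp add: lessThan_Suc)
  also have "\<dots> = (\<integral>x. (\<integral>y. integrand pol S0 (Suc N) g (x(N := y)) \<partial>\<mu>) \<partial>PM N)"
    by (rule product_integral_insert[OF _ _ int]) auto
  also have "\<dots> = (\<integral>x. integrand pol S0 N (Top pol N g) x \<partial>PM N)"
  proof (rule Bochner_Integration.integral_cong[OF refl])
    fix x :: "nat \<Rightarrow> 'm \<Rightarrow> real^'t^'r"
    define P where "P = (\<Sum>k<N. trace (traj A W C pol S0 x k) + sched_cost \<gamma> C (pol k (traj A W C pol S0 x k) (x k)))"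
    define T where "T = traj A W C pol S0 x N"
    have Tpd: "pd_mat T" unfolding T_def by (rule traj_pd[OF S0])
    have tr: "traj A W C pol S0 (x(N := y)) k = traj A W C pol S0 x k" if "k \<le> N" for k y
      by (rule traj_cong) (use that in auto)
    have eq: "integrand pol S0 (Suc N) g (x(N := y)) =
       P + (trace T + sched_cost \<gamma> C (pol N T y) + g (fmap A C T (pol N T y) y + W))" for y
    proof -
      have "(\<Sum>k<N. trace (traj A W C pol S0 (x(N := y)) k) + sched_cost \<gamma> C (pol k (traj A W C pol S0 (x(N := y)) k) ((x(N := y)) k))) = P"
        unfolding P_def by (intro sum.cong refl) (simp add: tr)
      moreover have "traj A W C pol S0 (x(N := y)) (Suc N) = fmap A C T (pol N T y) y + W"
        using tr[of N y] by (simp add: T_def)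
      ultimately show ?thesis unfolding integrand_def using tr[of N y] by (simp add: T_def)
    qed
    have "(\<integral>y. integrand pol S0 (Suc N) g (x(N := y)) \<partial>\<mu>)
        = (\<integral>y. P + (trace T + sched_cost \<gamma> C (pol N T y) + g (fmap A C T (pol N T y) y + W)) \<partial>\<mu>)"
      by (simp add: eq)
    also have "\<dots> = P + Top pol N g T"
      using Bochner_Integration.integral_add[OF finite_measure.integrable_const[OF mu_fin] good_Top(2)[OF pol gg Tpd, of N], of P]
      by (simp add: mu_measure1 Top_def)
    also have "\<dots> = integrand pol S0 N (Top pol N g) x"
      unfolding integrand_def P_def T_def ..
    finally show "(\<integral>y. integrand pol S0 (Suc N) g (x(N := y)) \<partial>\<mu>) = integrand pol S0 N (Top pol N g) x" .
  qed
  also have "\<dots> = costN pol S0 N (Top pol N g)" unfolding costN_def ..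
  finally show ?thesis .
qed

lemma costN_mono:
  assumes pol: "adm_policy pol" and S0: "pd_mat S0" and g1: "good g1" and g2: "good g2"
    and le: "\<And>S. pd_mat S \<Longrightarrow> g1 S \<le> g2 S"
  shows "costN pol S0 N g1 \<le> costN pol S0 N g2"
  unfolding costN_def
  by (intro integral_mono integrand_int[OF pol S0 g1] integrand_int[OF pol S0 g2])
     (simp add: integrand_def le traj_pd[OF S0])

lemma costN_cong:
  assumes S0: "pd_mat S0" and eq: "\<And>S. pd_mat S \<Longrightarrow> g1 S = g2 S"
  shows "costN pol S0 N g1 = costN pol S0 N g2"
  unfolding costN_def
  by (intro Bochner_Integration.integral_cong refl) (simp add: integrand_def eq traj_pd[OF S0])

lemma chain_le:
  assumes pol: "adm_policy pol" and S0: "pd_mat S0"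
  shows "j \<le> K \<Longrightarrow> costN pol S0 (K - j) (Wn j) \<le> costN pol S0 K (Wn 0)"
proof (induction j)
  case 0
  then show ?case by simp
next
  case (Suc j)
  define N where "N = K - Suc j"
  have KN: "K - j = Suc N" using Suc.prems N_def by simp
  have "costN pol S0 (K - Suc j) (Wn (Suc j)) = costN pol S0 N (Vop (Wn j))"
    unfolding N_def using Wn_Suc by (metis ext)
  also have "\<dots> \<le> costN pol S0 N (Top pol N (Wn j))"
    by (intro costN_mono pol S0 good_Vop(1) good_Top(1) good_Wn Top_ge_Vop)
  also have "\<dots> = costN pol S0 (K - j) (Wn j)"
    unfolding KN by (rule costN_Suc[symmetric, OF pol S0 good_Wn])
  also have "\<dots> \<le> costN pol S0 K (Wn 0)" using Suc by simp
  finally show ?case .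
qed

lemma chain_eq:
  assumes pol: "adm_policy pol" and S0: "pd_mat S0"
    and opt: "\<forall>k<K. \<forall>S H p. pd_mat S \<longrightarrow> Qfun A W C \<gamma> K k S H (pol k S H) \<le> Qfun A W C \<gamma> K k S H p"
  shows "j \<le> K \<Longrightarrow> costN pol S0 (K - j) (Wn j) = costN pol S0 K (Wn 0)"
proof (induction j)
  case 0
  then show ?case by simp
next
  case (Suc j)
  define N where "N = K - Suc j"
  have KN: "K - j = Suc N" using Suc.prems N_def by simp
  have NK: "N < K" "K - N = Suc j" using Suc.prems N_def by auto
  have "costN pol S0 (K - Suc j) (Wn (Suc j)) = costN pol S0 N (Vop (Wn j))"
    unfolding N_def using Wn_Suc by (metis ext)
  also have "\<dots> = costN pol S0 N (Top pol N (Wn j))"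
  proof (rule costN_cong[OF S0])
    fix S :: "real^'s^'s" assume S: "pd_mat S"
    have "trace S + sched_cost \<gamma> C (pol N S H) + Wn j (fmap A C S (pol N S H) H + W)
       \<le> trace S + sched_cost \<gamma> C p + Wn j (fmap A C S p H + W)" for H p
    proof -
      have "Qr A W C \<gamma> (K - N) S H (pol N S H) \<le> Qr A W C \<gamma> (K - N) S H p"
        using opt NK(1) S unfolding Qfun_def by blast
      then show ?thesis unfolding NK(2) Qr_Suc .
    qed
    then show "Vop (Wn j) S = Top pol N (Wn j) S" by (rule Top_eq_Vop[OF S, symmetric])
  qed
  also have "\<dots> = costN pol S0 (K - j) (Wn j)"
    unfolding KN by (rule costN_Suc[symmetric, OF pol S0 good_Wn])
  also have "\<dots> = costN pol S0 K (Wn 0)" using Suc by simp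
  finally show ?case .
qed

lemma cost_J_eq: "cost_J A W C \<gamma> K pol S0 = costN pol S0 K (Wn 0)"
proof -
  have "Wn 0 = trace" using Wn_0 by (metis ext)
  then show ?thesis
    unfolding cost_J_def costN_def integrand_def total_cost_def by (simp add: mu_def)
qed

lemma Wn_eq: "Wn K S0 = (\<integral>H. Min (range (\<lambda>p. Qfun A W C \<gamma> K 0 S0 (H :: 'm \<Rightarrow> real^'t^'r) p)) \<partial>gauss_chan)"
  unfolding Wn_def Qfun_def by (simp add: mu_def)

end


lemma sched_split:
  "sched_cost \<gamma> C (p(m := True)) = sched_cost \<gamma> C (p(m := False)) + trace (\<gamma> *\<^sub>R (C m ** transpose (C m)))"
proof -
  have "sched_cost \<gamma> C q = \<gamma> * trace (of_bool (q m) *\<^sub>R (C m ** transpose (C m)))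
     + (\<Sum>m'\<in>UNIV - {m}. \<gamma> * trace (of_bool (q m') *\<^sub>R (C m' ** transpose (C m'))))" for q
    unfolding sched_cost_def by (rule sum.remove) auto
  moreover have "(\<Sum>m'\<in>UNIV - {m}. \<gamma> * trace (of_bool ((p(m := b)) m') *\<^sub>R (C m' ** transpose (C m'))))
     = (\<Sum>m'\<in>UNIV - {m}. \<gamma> * trace (of_bool (p m') *\<^sub>R (C m' ** transpose (C m'))))" for b
    by (intro sum.cong) auto
  ultimately show ?thesis by (simp add: trace_scaleR)
qed

lemma part4_alg:
  fixes Q T D :: "('m::finite \<Rightarrow> bool) \<Rightarrow> real"
  assumes Q: "\<And>q. Q q = c + sched_cost \<gamma> C q + T q + D q" and opt: "\<forall>p'. Q p \<le> Q p'"
  shows "let ineq = (T (p(m := False)) + D (p(m := False)) - T (p(m := True)) - D (p(m := True))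
                     \<ge> trace (\<gamma> *\<^sub>R (C m ** transpose (C m))))
         in (p m \<longrightarrow> ineq) \<and> (ineq \<longrightarrow> (\<forall>p'. Q (p(m := True)) \<le> Q p'))"
proof -
  have iff: "(T (p(m := False)) + D (p(m := False)) - T (p(m := True)) - D (p(m := True))
                     \<ge> trace (\<gamma> *\<^sub>R (C m ** transpose (C m)))) \<longleftrightarrow> Q (p(m := True)) \<le> Q (p(m := False))"
    unfolding Q sched_split by linarith
  show ?thesis unfolding Let_def iff
  proof (intro conjI impI allI)
    assume "p m"
    then have "p(m := True) = p" by (metis (full_types) fun_upd_triv)
    then show "Q (p(m := True)) \<le> Q (p(m := False))" using opt by metis
  next
    fix p' assume le: "Q (p(m := True)) \<le> Q (p(m := False))"
    show "Q (p(m := True)) \<le> Q p'"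
    proof (cases "p m")
      case True
      then have "p(m := True) = p" by (metis (full_types) fun_upd_triv)
      then show ?thesis using opt by metis
    next
      case False
      then have "p(m := False) = p" by (metis (full_types) fun_upd_triv)
      then show ?thesis using opt le by (metis order_trans)
    qed
  qed
qed

theorem theorem1:
  fixes A W S0 :: "real^'s^'s"
    and C :: "'m::finite \<Rightarrow> real^'s^'t"
    and \<gamma> :: real and K :: nat
    and polopt :: "nat \<Rightarrow> real^'s^'s \<Rightarrow> ('m \<Rightarrow> real^'t^'r) \<Rightarrow> ('m \<Rightarrow> bool)"
  assumes gamma_pos: "\<gamma> > 0"
    and W_pd: "pd_mat W"
    and S0_pd: "pd_mat S0"
    and polopt_adm: "adm_policy polopt"
    and polopt_min: "\<forall>k<K. \<forall>S H p. pd_mat S \<longrightarrow>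
                       Qfun A W C \<gamma> K k S H (polopt k S H) \<le> Qfun A W C \<gamma> K k S H p"
  shows
    "(\<forall>pol :: nat \<Rightarrow> real^'s^'s \<Rightarrow> ('m \<Rightarrow> real^'t^'r) \<Rightarrow> ('m \<Rightarrow> bool). adm_policy pol \<longrightarrow> cost_J A W C \<gamma> K polopt S0 \<le> cost_J A W C \<gamma> K pol S0)
     \<and> cost_J A W C \<gamma> K polopt S0
         = (\<integral>H. Min (range (\<lambda>p. Qfun A W C \<gamma> K 0 S0 (H :: 'm \<Rightarrow> real^'t^'r) p)) \<partial>gauss_chan)
     \<and> (\<forall>k<K. \<forall>S (H :: 'm \<Rightarrow> real^'t^'r) p. pd_mat S \<longrightarrow>
          Qfun A W C \<gamma> K k S H p
            = trace S + sched_cost \<gamma> C p + trace (fmap A C S p H)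
              + real (K - k) * trace W
              + Delta A W C \<gamma> K k S H p * of_bool (k + 2 \<le> K))
     \<and> (\<forall>k<K. \<forall>S (H :: 'm \<Rightarrow> real^'t^'r) p m. pd_mat S \<longrightarrow> (\<forall>p'. Qfun A W C \<gamma> K k S H p \<le> Qfun A W C \<gamma> K k S H p') \<longrightarrow>
          (let ineq = (trace (fmap A C S (p(m := False)) H) + Delta A W C \<gamma> K k S H (p(m := False))
                       - trace (fmap A C S (p(m := True)) H) - Delta A W C \<gamma> K k S H (p(m := True))
                       \<ge> trace (\<gamma> *\<^sub>R (C m ** transpose (C m))))
           in (p m \<longrightarrow> ineq)
              \<and> (ineq \<longrightarrow> (\<forall>p'. Qfun A W C \<gamma> K k S H (p(m := True)) \<le> Qfun A W C \<gamma> K k S H p'))))"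
proof -
  define \<mu>0 where "\<mu>0 = (gauss_chan :: ('m \<Rightarrow> real^'t^'r) measure)"
  note mu0 = \<mu>0_def
  have P3: "\<forall>k<K. \<forall>S (H :: 'm \<Rightarrow> real^'t^'r) p. pd_mat S \<longrightarrow>
          Qfun A W C \<gamma> K k S H p
            = trace S + sched_cost \<gamma> C p + trace (fmap A C S p H)
              + real (K - k) * trace W
              + Delta A W C \<gamma> K k S H p * of_bool (k + 2 \<le> K)"
  proof (intro allI impI)
    fix k p and S :: "real^'s^'s" and H :: "'m \<Rightarrow> real^'t^'r"
    assume k: "k < K" and S: "pd_mat S"
    define n where "n = K - k - 1"
    have Kk: "K - k = Suc n" using k n_def by simp
    have D: "Delta A W C \<gamma> K k S H p * of_bool (k + 2 \<le> K) = Dr A W C \<gamma> n S H p"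
    proof (cases n)
      case 0
      then show ?thesis unfolding Delta_def using n_def by simp
    next
      case (Suc n')
      then have "k + 2 \<le> K" using n_def by simp
      then show ?thesis unfolding Delta_def using n_def by simp
    qed
    have "Qfun A W C \<gamma> K k S H p = Qr A W C \<gamma> (Suc n) S H p" unfolding Qfun_def Kk ..
    also have "\<dots> = trace S + sched_cost \<gamma> C p + trace (fmap A C S p H)
           + real (Suc n) * trace W + Dr A W C \<gamma> n S H p"
      by (rule Qr_formula[OF gamma_pos W_pd mu0 S])
    finally show "Qfun A W C \<gamma> K k S H p
            = trace S + sched_cost \<gamma> C p + trace (fmap A C S p H)
              + real (K - k) * trace W
              + Delta A W C \<gamma> K k S H p * of_bool (k + 2 \<le> K)"
      unfolding D Kk .
  qed
  have P4: "\<forall>k<K. \<forall>S (H :: 'm \<Rightarrow> real^'t^'r) p m. pd_mat S \<longrightarrow> (\<forall>p'. Qfun A W C \<gamma> K k S H p \<le> Qfun A W C \<gamma> K k S H p') \<longrightarrow>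
          (let ineq = (trace (fmap A C S (p(m := False)) H) + Delta A W C \<gamma> K k S H (p(m := False))
                       - trace (fmap A C S (p(m := True)) H) - Delta A W C \<gamma> K k S H (p(m := True))
                       \<ge> trace (\<gamma> *\<^sub>R (C m ** transpose (C m))))
           in (p m \<longrightarrow> ineq)
              \<and> (ineq \<longrightarrow> (\<forall>p'. Qfun A W C \<gamma> K k S H (p(m := True)) \<le> Qfun A W C \<gamma> K k S H p')))"
  proof (intro allI impI)
    fix k p m and S :: "real^'s^'s" and H :: "'m \<Rightarrow> real^'t^'r"
    assume k: "k < K" and S: "pd_mat S" and opt: "\<forall>p'. Qfun A W C \<gamma> K k S H p \<le> Qfun A W C \<gamma> K k S H p'"
    have D: "Delta A W C \<gamma> K k S H q * of_bool (k + 2 \<le> K) = Delta A W C \<gamma> K k S H q" for q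
    proof (cases "k + 2 \<le> K")
      case False
      then have "K - 1 - k = 0" using k by simp
      then show ?thesis unfolding Delta_def by simp
    qed simp
    have Q: "Qfun A W C \<gamma> K k S H q = (trace S + real (K - k) * trace W) + sched_cost \<gamma> C q
        + trace (fmap A C S q H) + Delta A W C \<gamma> K k S H q" for q
      using P3 k S D by simp
    show "let ineq = (trace (fmap A C S (p(m := False)) H) + Delta A W C \<gamma> K k S H (p(m := False))
                       - trace (fmap A C S (p(m := True)) H) - Delta A W C \<gamma> K k S H (p(m := True))
                       \<ge> trace (\<gamma> *\<^sub>R (C m ** transpose (C m))))
           in (p m \<longrightarrow> ineq)
              \<and> (ineq \<longrightarrow> (\<forall>p'. Qfun A W C \<gamma> K k S H (p(m := True)) \<le> Qfun A W C \<gamma> K k S H p'))"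
      by (rule part4_alg[where Q="Qfun A W C \<gamma> K k S H", OF Q opt])
  qed
  have Jopt: "cost_J A W C \<gamma> K polopt S0 = Wn A W C \<gamma> \<mu>0 K S0"
  proof -
    have "cost_J A W C \<gamma> K polopt S0 = costN A W C \<gamma> \<mu>0 polopt S0 K (Wn A W C \<gamma> \<mu>0 0)"
      by (rule cost_J_eq[OF gamma_pos W_pd mu0])
    also have "\<dots> = costN A W C \<gamma> \<mu>0 polopt S0 (K - K) (Wn A W C \<gamma> \<mu>0 K)"
      by (rule chain_eq[OF gamma_pos W_pd mu0 polopt_adm S0_pd polopt_min, symmetric]) simp
    also have "\<dots> = Wn A W C \<gamma> \<mu>0 K S0" by (simp add: costN_0[OF gamma_pos W_pd mu0])
    finally show ?thesis .
  qed
  have P1: "\<forall>pol :: nat \<Rightarrow> real^'s^'s \<Rightarrow> ('m \<Rightarrow> real^'t^'r) \<Rightarrow> ('m \<Rightarrow> bool). adm_policy pol \<longrightarrow> cost_J A W C \<gamma> K polopt S0 \<le> cost_J A W C \<gamma> K pol S0"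
  proof (intro allI impI)
    fix pol :: "nat \<Rightarrow> real^'s^'s \<Rightarrow> ('m \<Rightarrow> real^'t^'r) \<Rightarrow> ('m \<Rightarrow> bool)"
    assume pol: "adm_policy pol"
    have "Wn A W C \<gamma> \<mu>0 K S0 = costN A W C \<gamma> \<mu>0 pol S0 (K - K) (Wn A W C \<gamma> \<mu>0 K)"
      by (simp add: costN_0[OF gamma_pos W_pd mu0])
    also have "\<dots> \<le> costN A W C \<gamma> \<mu>0 pol S0 K (Wn A W C \<gamma> \<mu>0 0)"
      by (rule chain_le[OF gamma_pos W_pd mu0 pol S0_pd]) simp
    also have "\<dots> = cost_J A W C \<gamma> K pol S0"
      by (rule cost_J_eq[OF gamma_pos W_pd mu0, symmetric])
    finally show "cost_J A W C \<gamma> K polopt S0 \<le> cost_J A W C \<gamma> K pol S0" using Jopt by simp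
  qed
  have P2: "cost_J A W C \<gamma> K polopt S0
         = (\<integral>H. Min (range (\<lambda>p. Qfun A W C \<gamma> K 0 S0 (H :: 'm \<Rightarrow> real^'t^'r) p)) \<partial>gauss_chan)"
    using Jopt Wn_eq[OF gamma_pos W_pd mu0] by simp
  show ?thesis using P1 P2 P3 P4 by blast
qed

end
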